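(* For every unweighted congestion game $\mathcal{G}$ with cubic latency functions, $\mathrm{Apx}^1_\emptyset(\mathcal{G})\le\frac{17929}{34}\approx 527.323$.
   Context: A weighted congestion game consists of a finite set $[n]=\{1,\dots,n\}$ of players, a finite set $E$ of resources, for each player $i$ a weight $w_i>0$ and a nonempty finite strategy set $\Sigma_i\subseteq 2^E$, and for each resource $e$ a latency function $\ell_e:\mathbb{R}_{\ge 0}\to\mathbb{R}_{\ge 0}$. It is unweighted if $w_i=1$ for all $i$. Cubic latency functions means $\ell_e(x)=\sum_{j=0}^{3}\alpha_{e,j}x^j$ with all $\alpha_{e,j}\ge 0$. For a (possibly partial) profile in which each player in some subset $P\subseteq[n]$ has chosen a strategy $s_i$, the congestion of $e$ is $L_e=\sum_{i\in P:\,e\in s_i}w_i$ and the cost of a player $i\in P$ is $\sum_{e\in s_i}\ell_e(L_e)$. For a full profile $S$, $\mathrm{SUM}(S)=\sum_{i\in[n]}c_i(S)$ and $S^*$ minimizes $\mathrm{SUM}$. A one-round walk from the empty strategy profile: starting with no player having chosen a strategy, the players arrive one at a time in some order, and each arriving player selects a best response, i.e., a strategy in her strategy set minimizing her cost given the strategies already chosen by the previously arrived players (later players not yet present); the outcome is the full profile after all $n$ players have chosen. $\mathrm{Apx}^1_\emptyset(\mathcal{G})$ is the maximum, over all orderings of the players and all choices among best responses, of $\mathrm{SUM}(\text{outcome})/\mathrm{SUM}(S^* )$. *)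

theory Defs
  imports Main "HOL.Real"
begin

text \<open>A (possibly partial) profile is S :: nat => 'e set, only the values on the
  set of present players P matter.\<close>

definition cubic_lat :: "('e \<Rightarrow> nat \<Rightarrow> real) \<Rightarrow> 'e \<Rightarrow> real \<Rightarrow> real" where
  "cubic_lat \<alpha> e x = (\<Sum>j\<le>3. \<alpha> e j * x ^ j)"

definition load :: "nat set \<Rightarrow> (nat \<Rightarrow> 'e set) \<Rightarrow> 'e \<Rightarrow> real" where
  "load P S e = real (card {j \<in> P. e \<in> S j})"

definition pcost :: "('e \<Rightarrow> nat \<Rightarrow> real) \<Rightarrow> nat set \<Rightarrow> (nat \<Rightarrow> 'e set) \<Rightarrow> nat \<Rightarrow> real" where
  "pcost \<alpha> P S i = (\<Sum>e\<in>S i. cubic_lat \<alpha> e (load P S e))"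

definition SUMcost :: "('e \<Rightarrow> nat \<Rightarrow> real) \<Rightarrow> nat \<Rightarrow> (nat \<Rightarrow> 'e set) \<Rightarrow> real" where
  "SUMcost \<alpha> n S = (\<Sum>i<n. pcost \<alpha> {..<n} S i)"

definition valid_profile :: "nat \<Rightarrow> (nat \<Rightarrow> 'e set set) \<Rightarrow> (nat \<Rightarrow> 'e set) \<Rightarrow> bool" where
  "valid_profile n \<Sigma> S \<longleftrightarrow> (\<forall>i<n. S i \<in> \<Sigma> i)"

definition congestion_game :: "'e set \<Rightarrow> nat \<Rightarrow> (nat \<Rightarrow> 'e set set) \<Rightarrow> bool" where
  "congestion_game E n \<Sigma> \<longleftrightarrow> finite E \<and>
     (\<forall>i<n. finite (\<Sigma> i) \<and> \<Sigma> i \<noteq> {} \<and> \<Sigma> i \<subseteq> Pow E)"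

text \<open>S is the outcome of a one-round walk from the empty profile with arrival
  order \<pi> (\<pi> k is the (k+1)-th arriving player): every arriving player picks a
  best response against the previously arrived players only.\<close>
definition one_round_outcome ::
  "nat \<Rightarrow> (nat \<Rightarrow> 'e set set) \<Rightarrow> ('e \<Rightarrow> nat \<Rightarrow> real) \<Rightarrow> (nat \<Rightarrow> nat) \<Rightarrow> (nat \<Rightarrow> 'e set) \<Rightarrow> bool" where
  "one_round_outcome n \<Sigma> \<alpha> \<pi> S \<longleftrightarrow>
     bij_betw \<pi> {..<n} {..<n} \<and> valid_profile n \<Sigma> S \<and>
     (\<forall>k<n. \<forall>s\<in>\<Sigma> (\<pi> k).
        pcost \<alpha> (\<pi> ` {..k}) S (\<pi> k) \<le> pcost \<alpha> (\<pi> ` {..k}) (S(\<pi> k := s)) (\<pi> k))"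

end

theory Submission
  imports Defs Complex_Main
begin


lemma y2: fixes x y :: real shows "2*x*y \<le> x^2 + y^2"
proof -
  have "x^2 + y^2 - 2*x*y = (x-y)^2" by algebra
  moreover have "(x-y)^2 \<ge> 0" by simp
  ultimately show ?thesis by linarith
qed

lemma y3: fixes x y :: real assumes "x \<ge> 0" "y \<ge> 0" shows "3*x*y^2 \<le> x^3 + 2*y^3"
proof -
  have "x^3 + 2*y^3 - 3*x*y^2 = (x-y)^2 * (x + 2*y)" by algebra
  moreover have "(x-y)^2 * (x + 2*y) \<ge> 0" using assms by simp
  ultimately show ?thesis by linarith
qed

lemma y4: fixes x y :: real shows "4*x*y^3 \<le> x^4 + 3*y^4"
proof -
  have "x^4 + 3*y^4 - 4*x*y^3 = (x-y)^2 * ((x+y)^2 + 2*y^2)" by algebra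
  moreover have "(x-y)^2 * ((x+y)^2 + 2*y^2) \<ge> 0" by simp
  ultimately show ?thesis by linarith
qed

lemma key3_big: fixes x z :: real assumes x6: "x \<ge> 6" and z0: "z \<ge> 0"
  shows "x^4 - (369/34)*((x^4+2*x^3+x^2)/4) + (369/34)*(z*(x+1)^3) \<le> (17929/34)*z^4"
proof -
  have Y0: "4*z*((7/40)*(x+1))^3 \<le> z^4 + 3*((7/40)*(x+1))^4" by (rule y4)
  have e3: "((7/40)*(x+1))^3 = (343/64000)*(x+1)^3" unfolding power_mult_distrib by (simp add: power_divide)
  have e4: "((7/40)*(x+1))^4 = (2401/2560000)*(x+1)^4" unfolding power_mult_distrib by (simp add: power_divide)
  have "4*z*((343/64000)*(x+1)^3) \<le> z^4 + 3*((2401/2560000)*(x+1)^4)" using Y0 unfolding e3 e4 .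
  hence Y: "z*(x+1)^3 \<le> (16000/343)*z^4 + (21/160)*(x+1)^4" by linarith
  have E: "(x+1)^4 = x^4+4*x^3+6*x^2+4*x+1" by algebra
  have z4: "z^4 \<ge> 0" using z0 by simp
  have h1: "x^4 \<ge> 6*x^3" using mult_right_mono[OF x6, of "x^3"] x6 by (simp add: power_Suc[symmetric] mult.commute)
  have h2: "x^3 \<ge> 6*x^2" using mult_right_mono[OF x6, of "x^2"] x6 by (simp add: power_Suc[symmetric] mult.commute)
  have h3: "x^2 \<ge> 6*x" using mult_right_mono[OF x6, of "x"] x6 by (simp add: power2_eq_square)
  have P: "1571*x^4 - 1476*x^3 - 31734*x^2 - 30996*x - 7749 \<ge> 0" using h1 h2 h3 x6 by linarith
  show ?thesis using Y E z4 P by (simp only: ring_distribs diff_divide_distrib add_divide_distrib)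
qed

lemma key3: fixes L K :: nat
  shows "real L^4 - (369/34)*((real L^4+2*real L^3+real L^2)/4) + (369/34)*(real K*(real L+1)^3) \<le> (17929/34)*real K^4"
proof (cases "L \<ge> 6")
  case True then show ?thesis using key3_big[of "real L" "real K"] by simp
next
  case False hence L5: "L \<le> 5" by simp
  show ?thesis
  proof (cases "K = 1")
    case True
    have "L \<in> {0,1,2,3,4,5}" using L5 by auto
    thus ?thesis using True by auto
  next
    case False
    have O8: "real K^4 \<ge> 8*real K"
    proof (cases "K = 0")
      case True then show ?thesis by simp
    next
      case F2: False
      with False have "real K \<ge> 2" by simp
      hence "2^3 \<le> real K^3" by (rule power_mono) simp
      hence "real K * 8 \<le> real K * real K^3" by (intro mult_left_mono) auto
      thus ?thesis by (simp add: power_Suc[symmetric] eval_nat_numeral mult.commute)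
    qed
    have "real L + 1 \<le> 6" using L5 by simp
    hence "(real L+1)^3 \<le> 6^3" by (rule power_mono) simp
    hence zx: "real K*(real L+1)^3 \<le> real K*216" by (intro mult_left_mono) auto
    have x4: "real L^4 \<le> real L^4 + 2*real L^3 + real L^2" by simp
    have "0 \<le> real L^4" by simp
    show ?thesis using O8 zx x4 \<open>0 \<le> real L^4\<close> by (simp only: ring_distribs diff_divide_distrib add_divide_distrib)
  qed
qed

lemma key2: fixes L K :: nat
  shows "real L^3 - (369/34)*((2*real L^3+3*real L^2+real L)/6) + (369/34)*(real K*(real L+1)^2) \<le> (17929/34)*real K^3"
proof (cases "L = 0")
  case True
  have "real K \<le> real K^3"
  proof (cases "K = 0")
    case False
    hence "1 \<le> real K^2" by (simp add: one_le_power)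
    hence "real K * 1 \<le> real K * real K^2" by (intro mult_left_mono) auto
    thus ?thesis by (simp add: power_Suc[symmetric] eval_nat_numeral)
  qed simp
  hence "369 * real K \<le> 17929 * real K ^ 3" using of_nat_0_le_iff[of K] by linarith
  thus ?thesis using True by simp
next
  case False
  define x where "x = real L"
  define z where "z = real K"
  have x1: "x \<ge> 1" using False x_def by simp
  have z0: "z \<ge> 0" using z_def by simp
  have Y0: "3*z*((x+1)/10)^2 \<le> z^3 + 2*((x+1)/10)^3" by (rule y3) (use x1 z0 in auto)
  have e2: "((x+1)/10)^2 = (x+1)^2/100" by (simp add: power_divide)
  have e3: "((x+1)/10)^3 = (x+1)^3/1000" by (simp add: power_divide)
  have Y: "z*(x+1)^2 \<le> (100/3)*z^3 + (1/15)*(x+1)^3" using Y0 unfolding e2 e3 by simp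
  have E2: "(x+1)^2 = x^2+2*x+1" by algebra
  have E3: "(x+1)^3 = x^3+3*x^2+3*x+1" by algebra
  have z3: "z^3 \<ge> 0" using z0 by simp
  have h: "x^2 \<ge> x" using mult_right_mono[OF x1, of x] x1 by (simp add: power2_eq_square)
  have x3: "x^3 \<ge> 0" using x1 by simp
  have "x^3 - (369/34)*((2*x^3+3*x^2+x)/6) + (369/34)*(z*(x+1)^2) \<le> (17929/34)*z^3"
    using Y E2 E3 z3 h x3 x1 by (simp only: ring_distribs diff_divide_distrib add_divide_distrib)
  thus ?thesis by (simp add: x_def z_def)
qed

lemma key1: fixes L K :: nat
  shows "real L^2 - (369/34)*((real L^2+real L)/2) + (369/34)*(real K*(real L+1)) \<le> (17929/34)*real K^2"
proof (cases "L = 0")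
  case True
  have "real K \<le> real K^2"
    by (cases "K = 0") (simp_all add: power2_eq_square)
  hence "369 * real K \<le> 17929 * (real K)^2" using of_nat_0_le_iff[of K] by linarith
  thus ?thesis using True by simp
next
  case False
  define x where "x = real L"
  define z where "z = real K"
  have x1: "x \<ge> 1" using False x_def by simp
  have Y0: "2*z*((x+1)/4) \<le> z^2 + ((x+1)/4)^2" by (rule y2)
  have e2: "((x+1)/4)^2 = (x+1)^2/16" by (simp add: power_divide)
  have Y: "z*(x+1) \<le> 2*z^2 + (1/8)*(x+1)^2" using Y0 unfolding e2 by simp
  have E2: "(x+1)^2 = x^2+2*x+1" by algebra
  have z2: "z^2 \<ge> 0" by simp
  have x2: "x^2 \<ge> 0" by simp
  have "x^2 - (369/34)*((x^2+x)/2) + (369/34)*(z*(x+1)) \<le> (17929/34)*z^2"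
    using Y E2 z2 x2 x1 by (simp only: ring_distribs diff_divide_distrib add_divide_distrib)
  thus ?thesis by (simp add: x_def z_def)
qed

lemma key0: fixes L K :: nat
  shows "real L - (369/34)*real L + (369/34)*real K \<le> (17929/34)*real K"
  by simp

lemma ps0: "(\<Sum>t\<in>{1..L}. real t ^ 0) = real L"
  by simp

lemma ps1: "(\<Sum>t\<in>{1..L}. real t ^ 1) = (real L^2+real L)/2"
  by (induction L) (simp_all add: field_simps power2_eq_square)

lemma ps2: "(\<Sum>t\<in>{1..L}. real t ^ 2) = (2*real L^3+3*real L^2+real L)/6"
  by (induction L) (simp_all add: field_simps eval_nat_numeral)

lemma ps3: "(\<Sum>t\<in>{1..L}. real t ^ 3) = (real L^4+2*real L^3+real L^2)/4"
  by (induction L) (simp_all add: field_simps eval_nat_numeral)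



definition Fsum :: "('e \<Rightarrow> nat \<Rightarrow> real) \<Rightarrow> 'e \<Rightarrow> nat \<Rightarrow> real" where
  "Fsum \<alpha> e m = (\<Sum>t\<in>{1..m}. cubic_lat \<alpha> e (real t))"

lemma lincomb: fixes a u v w y :: "nat \<Rightarrow> real"
  shows "(\<Sum>j\<in>A. a j * (u j - c*v j + c*w j - d*y j)) = (\<Sum>j\<in>A. a j*u j) - c*(\<Sum>j\<in>A. a j*v j) + c*(\<Sum>j\<in>A. a j*w j) - d*(\<Sum>j\<in>A. a j * y j)"
  by (simp add: sum.distrib sum_subtractf sum_distrib_left algebra_simps)

lemma lin2: fixes a b w :: "'a \<Rightarrow> real"
  shows "(\<Sum>e\<in>E. c * a e + d * b e - d * w e) = c * (\<Sum>e\<in>E. a e) + d * ((\<Sum>e\<in>E. b e) - (\<Sum>e\<in>E. w e))"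
  by (simp add: sum.distrib sum_subtractf sum_distrib_left algebra_simps)

lemma res_ineq:
  assumes nn: "\<And>j. j \<le> 3 \<Longrightarrow> \<alpha> e j \<ge> 0"
  shows "real L * cubic_lat \<alpha> e (real L) - (369/34) * Fsum \<alpha> e L
     + (369/34) * (real K * cubic_lat \<alpha> e (real L + 1))
     \<le> (17929/34) * (real K * cubic_lat \<alpha> e (real K))"
proof -
  define D where "D j = real L^(j+1) - (369/34)*(\<Sum>t\<in>{1..L}. real t^j)
      + (369/34)*(real K*(real L+1)^j) - (17929/34)*real K^(j+1)" for j
  have ps1': "(\<Sum>t\<in>{1..L}. real t) = (real L^2+real L)/2" using ps1[of L] by simp
  have Dn: "D j \<le> 0" if "j \<le> 3" for j
  proof -
    have "j = 0 \<or> j = 1 \<or> j = 2 \<or> j = 3" using that by auto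
    moreover have "D 0 \<le> 0" using key0[of L K] by (simp add: D_def)
    moreover have "D 1 \<le> 0"
    proof -
      have "D 1 = real L^(1+1) - (369/34)*((real L^2+real L)/2) + (369/34)*(real K*(real L+1)^1) - (17929/34)*real K^(1+1)"
        unfolding D_def ps1 ..
      thus ?thesis using key1[of L K] by (simp add: power2_eq_square)
    qed
    moreover have "D 2 \<le> 0"
    proof -
      have "D 2 = real L^(2+1) - (369/34)*((2*real L^3+3*real L^2+real L)/6) + (369/34)*(real K*(real L+1)^2) - (17929/34)*real K^(2+1)"
        unfolding D_def ps2 ..
      thus ?thesis using key2[of L K] by simp
    qed
    moreover have "D 3 \<le> 0"
    proof -
      have "D 3 = real L^(3+1) - (369/34)*((real L^4+2*real L^3+real L^2)/4) + (369/34)*(real K*(real L+1)^3) - (17929/34)*real K^(3+1)"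
        unfolding D_def ps3 ..
      thus ?thesis using key3[of L K] by simp
    qed
    ultimately show ?thesis by auto
  qed
  have A: "real L * cubic_lat \<alpha> e (real L) = (\<Sum>j\<le>3. \<alpha> e j * real L^(j+1))"
    unfolding cubic_lat_def sum_distrib_left by (rule sum.cong) (simp_all add: algebra_simps)
  have B: "Fsum \<alpha> e L = (\<Sum>j\<le>3. \<alpha> e j * (\<Sum>t\<in>{1..L}. real t^j))"
    unfolding Fsum_def cubic_lat_def sum_distrib_left by (rule sum.swap)
  have C: "real K * cubic_lat \<alpha> e (real L + 1) = (\<Sum>j\<le>3. \<alpha> e j * (real K*(real L+1)^j))"
    unfolding cubic_lat_def sum_distrib_left by (rule sum.cong) (simp_all add: algebra_simps)
  have Dd: "real K * cubic_lat \<alpha> e (real K) = (\<Sum>j\<le>3. \<alpha> e j * real K^(j+1))"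
    unfolding cubic_lat_def sum_distrib_left by (rule sum.cong) (simp_all add: algebra_simps)
  have "(\<Sum>j\<le>3. \<alpha> e j * D j) = (\<Sum>j\<le>3. \<alpha> e j * real L^(j+1)) - (369/34) * (\<Sum>j\<le>3. \<alpha> e j * (\<Sum>t\<in>{1..L}. real t^j))
     + (369/34) * (\<Sum>j\<le>3. \<alpha> e j * (real K*(real L+1)^j)) - (17929/34) * (\<Sum>j\<le>3. \<alpha> e j * real K^(j+1))"
    unfolding D_def by (rule lincomb)
  moreover have "(\<Sum>j\<le>3. \<alpha> e j * D j) \<le> 0"
    by (rule sum_nonpos) (simp add: mult_nonneg_nonpos nn Dn)
  ultimately show ?thesis unfolding A B C Dd by linarith
qed

lemma swap_sets:
  assumes fE: "finite E" and fI: "finite I" and sub: "\<forall>i\<in>I. T i \<subseteq> E"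
  shows "(\<Sum>i\<in>I. \<Sum>e\<in>T i. f e) = (\<Sum>e\<in>E. real (card {i\<in>I. e \<in> T i}) * (f e :: real))"
proof -
  have "(\<Sum>i\<in>I. \<Sum>e\<in>T i. f e) = (\<Sum>i\<in>I. \<Sum>e\<in>E. if e \<in> T i then f e else 0)"
  proof (rule sum.cong[OF refl])
    fix i assume "i \<in> I"
    hence "{e\<in>E. e \<in> T i} = T i" using sub by auto
    thus "(\<Sum>e\<in>T i. f e) = (\<Sum>e\<in>E. if e \<in> T i then f e else 0)"
      using sum.inter_filter[OF fE, of f "\<lambda>e. e \<in> T i"] by simp
  qed
  also have "\<dots> = (\<Sum>e\<in>E. \<Sum>i\<in>I. if e \<in> T i then f e else 0)" by (rule sum.swap)
  also have "\<dots> = (\<Sum>e\<in>E. real (card {i\<in>I. e \<in> T i}) * f e)"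
  proof (rule sum.cong[OF refl])
    fix e
    show "(\<Sum>i\<in>I. if e \<in> T i then f e else 0) = real (card {i\<in>I. e \<in> T i}) * f e"
      using sum.inter_filter[OF fI, of "\<lambda>_. f e" "\<lambda>i. e \<in> T i"] by simp
  qed
  finally show ?thesis .
qed

lemma sumcost_eq:
  assumes "finite E" "\<forall>i<n. T i \<subseteq> E"
  shows "SUMcost \<alpha> n T = (\<Sum>e\<in>E. load {..<n} T e * cubic_lat \<alpha> e (load {..<n} T e))"
  unfolding SUMcost_def pcost_def load_def
  using swap_sets[of E "{..<n}" T "\<lambda>e. cubic_lat \<alpha> e (real (card {j\<in>{..<n}. e \<in> T j}))"] assms by simp

lemma mono_lat:
  assumes nn: "\<And>j. j \<le> 3 \<Longrightarrow> \<alpha> e j \<ge> 0" and "0 \<le> x" "x \<le> y"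
  shows "cubic_lat \<alpha> e x \<le> cubic_lat \<alpha> e y"
  unfolding cubic_lat_def using assms by (intro sum_mono mult_left_mono power_mono) auto

lemma potential:
  assumes bij: "bij_betw \<pi> {..<n} {..<n}" and sub: "\<forall>i<n. S i \<subseteq> E" and fin: "finite E" and "m \<le> n"
  shows "(\<Sum>k<m. pcost \<alpha> (\<pi>`{..k}) S (\<pi> k)) = (\<Sum>e\<in>E. Fsum \<alpha> e (card {j\<in>\<pi>`{..<m}. e \<in> S j}))"
  using \<open>m \<le> n\<close>
proof (induction m)
  case 0 show ?case by (simp add: Fsum_def)
next
  case (Suc m)
  hence mn: "m < n" by simp
  have inj: "inj_on \<pi> {..<n}" using bij by (rule bij_betw_imp_inj_on)
  have pim: "\<pi> m \<notin> \<pi>`{..<m}" using inj_on_image_mem_iff[OF inj, of m "{..<m}"] mn by auto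
  have img: "\<pi>`{..<Suc m} = insert (\<pi> m) (\<pi>`{..<m})" by (simp add: lessThan_Suc)
  have img2: "\<pi>`{..m} = insert (\<pi> m) (\<pi>`{..<m})" by (simp add: lessThan_Suc flip: lessThan_Suc_atMost)
  define c where "c e = card {j\<in>\<pi>`{..<m}. e \<in> S j}" for e
  have cnew: "card {j\<in>insert (\<pi> m) (\<pi>`{..<m}). e \<in> S j} = (if e \<in> S (\<pi> m) then Suc (c e) else c e)" for e
  proof (cases "e \<in> S (\<pi> m)")
    case True
    hence "{j\<in>insert (\<pi> m) (\<pi>`{..<m}). e \<in> S j} = insert (\<pi> m) {j\<in>\<pi>`{..<m}. e \<in> S j}" by auto
    thus ?thesis using True pim by (simp add: c_def)
  next
    case False
    hence "{j\<in>insert (\<pi> m) (\<pi>`{..<m}). e \<in> S j} = {j\<in>\<pi>`{..<m}. e \<in> S j}" by auto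
    thus ?thesis using False by (simp add: c_def)
  qed
  have Sm: "S (\<pi> m) \<subseteq> E" using sub bij_betw_apply[OF bij] mn by auto
  have "pcost \<alpha> (\<pi>`{..m}) S (\<pi> m) = (\<Sum>e\<in>S (\<pi> m). cubic_lat \<alpha> e (real (Suc (c e))))"
    unfolding pcost_def load_def img2 cnew by simp
  also have "\<dots> = (\<Sum>e\<in>E. if e \<in> S (\<pi> m) then cubic_lat \<alpha> e (real (Suc (c e))) else 0)"
  proof -
    have "{e\<in>E. e \<in> S (\<pi> m)} = S (\<pi> m)" using Sm by auto
    thus ?thesis using sum.inter_filter[OF fin, of "\<lambda>e. cubic_lat \<alpha> e (real (Suc (c e)))" "\<lambda>e. e \<in> S (\<pi> m)"] by simp
  qed
  finally have step: "pcost \<alpha> (\<pi>`{..m}) S (\<pi> m) = (\<Sum>e\<in>E. if e \<in> S (\<pi> m) then cubic_lat \<alpha> e (real (Suc (c e))) else 0)" .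
  have F: "Fsum \<alpha> e (card {j\<in>\<pi>`{..<Suc m}. e \<in> S j}) = Fsum \<alpha> e (c e) + (if e \<in> S (\<pi> m) then cubic_lat \<alpha> e (real (Suc (c e))) else 0)" for e
    unfolding img cnew by (simp add: Fsum_def)
  have IH: "(\<Sum>k<m. pcost \<alpha> (\<pi>`{..k}) S (\<pi> k)) = (\<Sum>e\<in>E. Fsum \<alpha> e (c e))"
    using Suc.IH mn by (simp add: c_def)
  show ?case by (simp add: IH step F sum.distrib)
qed

lemma br_bound:
  assumes cg: "congestion_game E n \<Sigma>"
    and nn: "\<And>e j. e \<in> E \<Longrightarrow> j \<le> 3 \<Longrightarrow> \<alpha> e j \<ge> 0"
    and oro: "one_round_outcome n \<Sigma> \<alpha> \<pi> S"
    and vo: "valid_profile n \<Sigma> Sopt"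
    and kn: "k < n"
  shows "pcost \<alpha> (\<pi>`{..k}) S (\<pi> k) \<le> (\<Sum>e\<in>Sopt (\<pi> k). cubic_lat \<alpha> e (load {..<n} S e + 1))"
proof -
  have bij: "bij_betw \<pi> {..<n} {..<n}" using oro by (simp add: one_round_outcome_def)
  have pk: "\<pi> k < n" using bij_betw_apply[OF bij] kn by auto
  have sopt: "Sopt (\<pi> k) \<in> \<Sigma> (\<pi> k)" using vo pk by (simp add: valid_profile_def)
  have soptE: "Sopt (\<pi> k) \<subseteq> E" using cg sopt pk by (auto simp: congestion_game_def)
  define P where "P = \<pi>`{..k}"
  define S' where "S' = S(\<pi> k := Sopt (\<pi> k))"
  have "pcost \<alpha> P S (\<pi> k) \<le> pcost \<alpha> P S' (\<pi> k)"
    using oro kn sopt unfolding one_round_outcome_def P_def S'_def by blast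
  also have "\<dots> = (\<Sum>e\<in>Sopt (\<pi> k). cubic_lat \<alpha> e (load P S' e))"
    by (simp add: pcost_def S'_def)
  also have "\<dots> \<le> (\<Sum>e\<in>Sopt (\<pi> k). cubic_lat \<alpha> e (load {..<n} S e + 1))"
  proof (rule sum_mono)
    fix e assume eS: "e \<in> Sopt (\<pi> k)"
    have eE: "e \<in> E" using eS soptE by auto
    have PN: "P \<subseteq> {..<n}" using bij_betw_apply[OF bij] kn unfolding P_def by auto
    have "{j\<in>P. e \<in> S' j} \<subseteq> insert (\<pi> k) {j\<in>{..<n}. e \<in> S j}"
      using PN by (auto simp: S'_def)
    hence "card {j\<in>P. e \<in> S' j} \<le> card (insert (\<pi> k) {j\<in>{..<n}. e \<in> S j})"
      by (rule card_mono[rotated]) simp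
    also have "\<dots> \<le> Suc (card {j\<in>{..<n}. e \<in> S j})" by (simp add: card_insert_if)
    finally have "load P S' e \<le> load {..<n} S e + 1" unfolding load_def by simp
    thus "cubic_lat \<alpha> e (load P S' e) \<le> cubic_lat \<alpha> e (load {..<n} S e + 1)"
      by (intro mono_lat[of \<alpha> e, OF nn[OF eE]]) (auto simp: load_def)
  qed
  finally show ?thesis unfolding P_def .
qed

theorem mainTheorem12:
  fixes E :: "'e set" and n :: nat and \<Sigma> :: "nat \<Rightarrow> 'e set set"
    and \<alpha> :: "'e \<Rightarrow> nat \<Rightarrow> real" and \<pi> :: "nat \<Rightarrow> nat"
    and S Sopt :: "nat \<Rightarrow> 'e set"
  assumes "congestion_game E n \<Sigma>"
    and "\<And>e j. e \<in> E \<Longrightarrow> j \<le> 3 \<Longrightarrow> \<alpha> e j \<ge> 0"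
    and "one_round_outcome n \<Sigma> \<alpha> \<pi> S"
    and "valid_profile n \<Sigma> Sopt"
  shows "SUMcost \<alpha> n S \<le> (17929 / 34) * SUMcost \<alpha> n Sopt"
proof -
  note cg = assms(1) and nn = assms(2) and oro = assms(3) and vo = assms(4)
  have fin: "finite E" using cg by (simp add: congestion_game_def)
  have bij: "bij_betw \<pi> {..<n} {..<n}" using oro by (simp add: one_round_outcome_def)
  have subS: "\<forall>i<n. S i \<subseteq> E" using cg oro
    by (auto simp: congestion_game_def one_round_outcome_def valid_profile_def)
  have subO: "\<forall>i<n. Sopt i \<subseteq> E" using cg vo
    by (auto simp: congestion_game_def valid_profile_def)
  define cL where "cL e = card {j\<in>{..<n}. e \<in> S j}" for e
  define cO where "cO e = card {j\<in>{..<n}. e \<in> Sopt j}" for e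
  have lS: "load {..<n} S e = real (cL e)" for e by (simp add: load_def cL_def)
  have lO: "load {..<n} Sopt e = real (cO e)" for e by (simp add: load_def cO_def)
  have SS: "SUMcost \<alpha> n S = (\<Sum>e\<in>E. real (cL e) * cubic_lat \<alpha> e (real (cL e)))"
    using sumcost_eq[OF fin subS] by (simp add: lS)
  have SO: "SUMcost \<alpha> n Sopt = (\<Sum>e\<in>E. real (cO e) * cubic_lat \<alpha> e (real (cO e)))"
    using sumcost_eq[OF fin subO] by (simp add: lO)
  have img: "\<pi>`{..<n} = {..<n}" using bij by (simp add: bij_betw_def)
  have pot: "(\<Sum>k<n. pcost \<alpha> (\<pi>`{..k}) S (\<pi> k)) = (\<Sum>e\<in>E. Fsum \<alpha> e (cL e))"
    using potential[OF bij subS fin le_refl] by (simp add: img cL_def)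
  have "(\<Sum>k<n. pcost \<alpha> (\<pi>`{..k}) S (\<pi> k))
      \<le> (\<Sum>k<n. \<Sum>e\<in>Sopt (\<pi> k). cubic_lat \<alpha> e (real (cL e) + 1))"
    by (rule sum_mono) (use br_bound[OF cg nn oro vo] in \<open>simp add: lS\<close>)
  also have "\<dots> = (\<Sum>i<n. \<Sum>e\<in>Sopt i. cubic_lat \<alpha> e (real (cL e) + 1))"
    by (rule sum.reindex_bij_betw[OF bij])
  also have "\<dots> = (\<Sum>e\<in>E. real (cO e) * cubic_lat \<alpha> e (real (cL e) + 1))"
    using swap_sets[of E "{..<n}" Sopt "\<lambda>e. cubic_lat \<alpha> e (real (cL e) + 1)"] fin subO
    by (simp add: cO_def)
  finally have PhiB: "(\<Sum>e\<in>E. Fsum \<alpha> e (cL e)) \<le> (\<Sum>e\<in>E. real (cO e) * cubic_lat \<alpha> e (real (cL e) + 1))"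
    using pot by simp
  have "(\<Sum>e\<in>E. real (cL e) * cubic_lat \<alpha> e (real (cL e))) \<le>
     (\<Sum>e\<in>E. (17929/34) * (real (cO e) * cubic_lat \<alpha> e (real (cO e))) + (369/34) * Fsum \<alpha> e (cL e)
        - (369/34) * (real (cO e) * cubic_lat \<alpha> e (real (cL e) + 1)))"
  proof (rule sum_mono)
    fix e assume "e \<in> E"
    have "\<And>j. j \<le> 3 \<Longrightarrow> \<alpha> e j \<ge> 0" using nn \<open>e \<in> E\<close> by blast
    from res_ineq[of \<alpha> e "cL e" "cO e", OF this]
    show "real (cL e) * cubic_lat \<alpha> e (real (cL e)) \<le> (17929/34) * (real (cO e) * cubic_lat \<alpha> e (real (cO e))) + (369/34) * Fsum \<alpha> e (cL e)
        - (369/34) * (real (cO e) * cubic_lat \<alpha> e (real (cL e) + 1))" by linarith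
  qed
  also have "\<dots> = (17929/34) * (\<Sum>e\<in>E. real (cO e) * cubic_lat \<alpha> e (real (cO e)))
      + (369/34) * ((\<Sum>e\<in>E. Fsum \<alpha> e (cL e)) - (\<Sum>e\<in>E. real (cO e) * cubic_lat \<alpha> e (real (cL e) + 1)))"
    by (rule lin2)
  also have "\<dots> \<le> (17929/34) * (\<Sum>e\<in>E. real (cO e) * cubic_lat \<alpha> e (real (cO e)))"
    using PhiB by simp
  finally show ?thesis unfolding SS SO .
qed

end
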